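(* Let $M$ be a complete pointed metric space. Then $\delta(M)=\{\delta(x):x\in M\}$ is a weakly closed subset of $\mathcal F(M)$.
   Context: A pointed metric space $M$ has a distinguished origin $0$. $\mathrm{Lip}_0(M)$ is the Banach space of real Lipschitz functions on $M$ vanishing at $0$ with the best Lipschitz constant as norm; $\delta(x)\in\mathrm{Lip}_0(M)^*$ is evaluation at $x$, and the Lipschitz free space $\mathcal F(M)$ is the closed linear span of $\delta(M)$ in $\mathrm{Lip}_0(M)^*$, with $\mathcal F(M)^*=\mathrm{Lip}_0(M)$. "Weakly" refers to the weak topology $\sigma(\mathcal F(M),\mathrm{Lip}_0(M))$. *)

theory Defs
  imports "HOL-Analysis.Analysis"
begin

text \<open>Pointed metric space: a metric space type 'a with distinguished origin z.\<close>

definition Lip0 :: "'a::metric_space \<Rightarrow> ('a \<Rightarrow> real) set" where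
  "Lip0 z = {f. (\<exists>L. L-lipschitz_on UNIV f) \<and> f z = 0}"

definition lipnorm :: "('a::metric_space \<Rightarrow> real) \<Rightarrow> real" where
  "lipnorm f = Inf {L. L-lipschitz_on UNIV f}"

text \<open>Elements of Lip_0(M)^* are modelled as functionals on Lip0 z, extensional
  (value undefined) outside Lip0 z.\<close>
definition Lip0_dual :: "'a::metric_space \<Rightarrow> (('a \<Rightarrow> real) \<Rightarrow> real) set" where
  "Lip0_dual z = {\<phi> \<in> Lip0 z \<rightarrow>\<^sub>E UNIV.
      (\<forall>f\<in>Lip0 z. \<forall>g\<in>Lip0 z. \<forall>a b. \<phi> (\<lambda>x. a * f x + b * g x) = a * \<phi> f + b * \<phi> g) \<and>
      (\<exists>C. \<forall>f\<in>Lip0 z. \<bar>\<phi> f\<bar> \<le> C * lipnorm f)}"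

definition dual_norm :: "'a::metric_space \<Rightarrow> (('a \<Rightarrow> real) \<Rightarrow> real) \<Rightarrow> real" where
  "dual_norm z \<phi> = (SUP f\<in>{f\<in>Lip0 z. lipnorm f \<le> 1}. \<bar>\<phi> f\<bar>)"

definition delta :: "'a::metric_space \<Rightarrow> 'a \<Rightarrow> (('a \<Rightarrow> real) \<Rightarrow> real)" where
  "delta z x = (\<lambda>f\<in>Lip0 z. f x)"

definition delta_span :: "'a::metric_space \<Rightarrow> (('a \<Rightarrow> real) \<Rightarrow> real) set" where
  "delta_span z = {(\<lambda>f\<in>Lip0 z. \<Sum>x\<in>S. c x * f x) | S c. finite S}"

definition FreeSpace :: "'a::metric_space \<Rightarrow> (('a \<Rightarrow> real) \<Rightarrow> real) set" where
  "FreeSpace z = {\<phi> \<in> Lip0_dual z.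
      \<forall>e>0. \<exists>\<psi>\<in>delta_span z. dual_norm z (\<lambda>f. \<phi> f - \<psi> f) < e}"

text \<open>Weak topology sigma(F(M), Lip_0(M)) on F(M): pointwise convergence on Lip_0(M).\<close>
definition weak_top_Free :: "'a::metric_space \<Rightarrow> (('a \<Rightarrow> real) \<Rightarrow> real) topology" where
  "weak_top_Free z = subtopology (powertop_real (Lip0 z)) (FreeSpace z)"

end

theory Submission
  imports Defs
begin

lemma lip0_bound:
  assumes "f \<in> Lip0 z"
  shows "\<bar>f x - f y\<bar> \<le> lipnorm f * dist x y" and "0 \<le> lipnorm f"
proof -
  obtain L0 where L0: "L0-lipschitz_on UNIV f" using assms by (auto simp: Lip0_def)
  have ne: "{L. L-lipschitz_on UNIV f} \<noteq> {}" using L0 by blast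
  have bb: "bdd_below {L. L-lipschitz_on UNIV f}"
    by (rule bdd_belowI[of _ 0]) (auto simp: lipschitz_on_def)
  show "0 \<le> lipnorm f" unfolding lipnorm_def
    by (rule cInf_greatest[OF ne]) (auto simp: lipschitz_on_def)
  show "\<bar>f x - f y\<bar> \<le> lipnorm f * dist x y"
  proof (cases "x = y")
    case True then show ?thesis by simp
  next
    case False
    then have d: "dist x y > 0" by simp
    have "\<bar>f x - f y\<bar> / dist x y \<le> lipnorm f" unfolding lipnorm_def
    proof (rule cInf_greatest[OF ne])
      fix L assume "L \<in> {L. L-lipschitz_on UNIV f}"
      then have "dist (f x) (f y) \<le> L * dist x y" by (auto simp: lipschitz_on_def)
      then show "\<bar>f x - f y\<bar> / dist x y \<le> L" using d by (simp add: dist_real_def divide_le_eq)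
    qed
    then show ?thesis using d by (simp add: divide_le_eq)
  qed
qed

lemma lipnorm_le:
  assumes "L-lipschitz_on UNIV f"
  shows "lipnorm f \<le> L"
  unfolding lipnorm_def
  by (rule cInf_lower) (use assms in \<open>auto intro!: bdd_belowI[of _ 0] simp: lipschitz_on_def\<close>)

lemma basic_open:
  assumes "finite F" "F \<subseteq> I"
  shows "openin (powertop_real I) {\<psi> \<in> topspace (powertop_real I). \<forall>f\<in>F. \<bar>\<psi> f - \<phi> f\<bar> < \<eta>}"
proof -
  have "openin (powertop_real I) ((\<Inter>f\<in>F. {\<psi> \<in> topspace (powertop_real I). \<psi> f \<in> ball (\<phi> f) \<eta>}) \<inter> topspace (powertop_real I))"
  proof (rule openin_INT[OF assms(1)])
    fix f assume "f \<in> F"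
    then have "f \<in> I" using assms by auto
    show "openin (powertop_real I) {\<psi> \<in> topspace (powertop_real I). \<psi> f \<in> ball (\<phi> f) \<eta>}"
      by (rule openin_continuous_map_preimage[OF continuous_map_product_projection[OF \<open>f \<in> I\<close>]]) auto
  qed
  moreover have "((\<Inter>f\<in>F. {\<psi> \<in> topspace (powertop_real I). \<psi> f \<in> ball (\<phi> f) \<eta>}) \<inter> topspace (powertop_real I))
     = {\<psi> \<in> topspace (powertop_real I). \<forall>f\<in>F. \<bar>\<psi> f - \<phi> f\<bar> < \<eta>}"
    by (auto simp: dist_real_def abs_minus_commute)
  ultimately show ?thesis by simp
qed

lemma fa_Lip0: "(\<lambda>y. dist y a - dist z a) \<in> Lip0 z"
  and fa_lip: "1-lipschitz_on UNIV (\<lambda>y. dist y a - dist z a)"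
proof -
  show l: "1-lipschitz_on UNIV (\<lambda>y. dist y a - dist z a)"
  proof (rule lipschitz_onI)
    fix x y :: 'a
    have "\<bar>dist x a - dist y a\<bar> \<le> dist x y"
      using dist_triangle[of x a y] dist_triangle[of y a x] by (simp add: dist_commute abs_le_iff)
    then show "dist (dist x a - dist z a) (dist y a - dist z a) \<le> 1 * dist x y"
      by (simp add: dist_real_def)
  qed simp
  then show "(\<lambda>y. dist y a - dist z a) \<in> Lip0 z" unfolding Lip0_def by auto
qed

lemma exists_small:
  assumes phi: "\<phi> \<in> FreeSpace z"
    and H: "\<And>F \<eta>. finite F \<Longrightarrow> F \<subseteq> Lip0 z \<Longrightarrow> \<eta> > 0 \<Longrightarrow> (\<exists>x. \<forall>f\<in>F. \<bar>f x - \<phi> f\<bar> < \<eta>)"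
    and e: "e > 0"
  shows "\<exists>s. \<phi> (\<lambda>y. dist y s - dist z s) + dist z s < e"
proof -
  have e3: "e/3 > 0" using e by simp
  obtain \<psi> where psi: "\<psi> \<in> delta_span z" and dn: "dual_norm z (\<lambda>f. \<phi> f - \<psi> f) < e/3"
    using phi e3 unfolding FreeSpace_def by blast
  obtain S c where S: "finite S" and psidef: "\<psi> = (\<lambda>f\<in>Lip0 z. \<Sum>x\<in>S. c x * f x)"
    using psi unfolding delta_span_def by blast
  obtain C where C: "\<forall>f\<in>Lip0 z. \<bar>\<phi> f\<bar> \<le> C * lipnorm f"
    using phi unfolding FreeSpace_def Lip0_dual_def by blast
  define S' where "S' = insert z S"
  have S'ne: "S' \<noteq> {}" and S'fin: "finite S'" using S by (auto simp: S'_def)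
  define h where "h = (\<lambda>y. infdist y S')"
  have hlip: "1-lipschitz_on UNIV h"
    unfolding h_def by (rule lipschitz_onI) (auto simp: dist_real_def infdist_triangle_abs)
  have hL: "h \<in> Lip0 z" unfolding Lip0_def using hlip by (auto simp: h_def S'_def)
  have hn: "lipnorm h \<le> 1" by (rule lipnorm_le[OF hlip])
  have bdd: "bdd_above ((\<lambda>f. \<bar>\<phi> f - \<psi> f\<bar>) ` {f\<in>Lip0 z. lipnorm f \<le> 1})"
  proof (rule bdd_aboveI2)
    fix f assume f: "f \<in> {f\<in>Lip0 z. lipnorm f \<le> 1}"
    then have fL: "f \<in> Lip0 z" and fn: "lipnorm f \<le> 1" by auto
    have n0: "0 \<le> lipnorm f" using lip0_bound(2)[OF fL] .
    have "\<bar>\<phi> f\<bar> \<le> C * lipnorm f" using C fL by blast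
    also have "\<dots> \<le> \<bar>C\<bar>"
      using n0 fn by (metis abs_ge_self abs_mult mult.right_neutral mult_left_mono abs_ge_zero abs_of_nonneg order_trans)
    finally have p1: "\<bar>\<phi> f\<bar> \<le> \<bar>C\<bar>" .
    have fz: "f z = 0" using fL by (simp add: Lip0_def)
    have "\<bar>\<psi> f\<bar> = \<bar>\<Sum>x\<in>S. c x * f x\<bar>" using fL by (simp add: psidef)
    also have "\<dots> \<le> (\<Sum>x\<in>S. \<bar>c x * f x\<bar>)" by (rule sum_abs)
    also have "\<dots> \<le> (\<Sum>x\<in>S. \<bar>c x\<bar> * dist x z)"
    proof (rule sum_mono)
      fix x assume "x \<in> S"
      have "\<bar>f x\<bar> \<le> lipnorm f * dist x z" using lip0_bound(1)[OF fL, of x z] fz by simp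
      also have "\<dots> \<le> dist x z" using fn mult_right_mono[OF fn zero_le_dist[of x z]] by simp
      finally show "\<bar>c x * f x\<bar> \<le> \<bar>c x\<bar> * dist x z"
        by (simp add: abs_mult mult_left_mono)
    qed
    finally have p2: "\<bar>\<psi> f\<bar> \<le> (\<Sum>x\<in>S. \<bar>c x\<bar> * dist x z)" .
    show "\<bar>\<phi> f - \<psi> f\<bar> \<le> \<bar>C\<bar> + (\<Sum>x\<in>S. \<bar>c x\<bar> * dist x z)"
      using p1 p2 by linarith
  qed
  have "\<bar>\<phi> h - \<psi> h\<bar> \<le> dual_norm z (\<lambda>f. \<phi> f - \<psi> f)"
    unfolding dual_norm_def by (rule cSUP_upper[OF _ bdd]) (use hL hn in auto)
  moreover have "\<psi> h = 0" using hL by (simp add: psidef h_def S'_def)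
  ultimately have phih: "\<phi> h < e/3" using dn by linarith
  define fa where "fa = (\<lambda>a. \<lambda>y::'a. dist y a - dist z a)"
  have "finite (insert h (fa ` S'))" using S'fin by simp
  moreover have "insert h (fa ` S') \<subseteq> Lip0 z" using hL fa_Lip0 by (auto simp: fa_def)
  ultimately obtain x where x: "\<forall>f\<in>insert h (fa ` S'). \<bar>f x - \<phi> f\<bar> < e/3"
    using H e3 by blast
  have "\<bar>h x - \<phi> h\<bar> < e/3" using x by auto
  then have "h x < 2*e/3" using phih by arith
  then have "(INF a\<in>S'. dist x a) < 2*e/3" by (simp add: h_def infdist_notempty[OF S'ne])
  then obtain s where s: "s \<in> S'" "dist x s < 2*e/3"
    using cINF_less_iff[OF S'ne, of "\<lambda>a. dist x a"] bdd_belowI2[where m=0 and f="\<lambda>a. dist x a" and A=S']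
    by (metis zero_le_dist)
  have "\<bar>fa s x - \<phi> (fa s)\<bar> < e/3" using x s by auto
  then have "\<phi> (fa s) + dist z s < e" using s unfolding fa_def by arith
  then show ?thesis unfolding fa_def by blast
qed

lemma key:
  fixes z :: "'a::complete_space"
  assumes phi: "\<phi> \<in> FreeSpace z"
    and H: "\<And>F \<eta>. finite F \<Longrightarrow> F \<subseteq> Lip0 z \<Longrightarrow> \<eta> > 0 \<Longrightarrow> (\<exists>x. \<forall>f\<in>F. \<bar>f x - \<phi> f\<bar> < \<eta>)"
  shows "\<exists>x0. \<phi> = delta z x0"
proof -
  define fa where "fa = (\<lambda>a. \<lambda>y::'a. dist y a - dist z a)"
  define g where "g = (\<lambda>a. \<phi> (fa a) + dist z a)"
  have faL: "fa a \<in> Lip0 z" for a unfolding fa_def by (rule fa_Lip0)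
  have near: "\<bar>fa a x - \<phi> (fa a)\<bar> = \<bar>dist x a - g a\<bar>" for a x
    by (simp add: fa_def g_def algebra_simps)
  have H2: "\<exists>x. \<bar>dist x a - g a\<bar> < \<eta> \<and> \<bar>dist x b - g b\<bar> < \<eta>" if eta: "\<eta> > 0" for a b \<eta>
  proof -
    obtain x where "\<forall>f\<in>{fa a, fa b}. \<bar>f x - \<phi> f\<bar> < \<eta>"
      using H[of "{fa a, fa b}" \<eta>] faL eta by auto
    then show ?thesis using near by auto
  qed
  have tri: "dist a b \<le> g a + g b" for a b
  proof (rule field_le_epsilon)
    fix e :: real assume "e > 0"
    then obtain x where x: "\<bar>dist x a - g a\<bar> < e/2" "\<bar>dist x b - g b\<bar> < e/2"
      using H2[of "e/2" a b] by auto
    have "dist a b \<le> dist x a + dist x b" by (metis dist_commute dist_triangle)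
    then show "dist a b \<le> g a + g b + e" using x by arith
  qed
  have tri2: "g a \<le> g b + dist a b" for a b
  proof (rule field_le_epsilon)
    fix e :: real assume "e > 0"
    then obtain x where x: "\<bar>dist x a - g a\<bar> < e/2" "\<bar>dist x b - g b\<bar> < e/2"
      using H2[of "e/2" a b] by auto
    have "dist x a \<le> dist x b + dist a b" by (metis dist_commute dist_triangle)
    then show "g a \<le> g b + dist a b + e" using x by arith
  qed
  have "\<forall>n. \<exists>s. g s < inverse (real (Suc n))"
    using exists_small[OF phi H] unfolding g_def fa_def by (simp add: dist_commute)
  then obtain s where s: "\<And>n. g (s n) < inverse (real (Suc n))" by metis
  have smallN: "\<exists>N. \<forall>n\<ge>N. g (s n) < e" if e0: "e > 0" for e
  proof -
    obtain N where N: "inverse (real (Suc N)) < e" using reals_Archimedean[OF e0] by blast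
    have "g (s n) < e" if "n \<ge> N" for n
    proof -
      have "inverse (real (Suc n)) \<le> inverse (real (Suc N))"
        using that by (simp add: le_imp_inverse_le)
      then show ?thesis using s[of n] N by linarith
    qed
    then show ?thesis by blast
  qed
  have "Cauchy s"
  proof (rule metric_CauchyI)
    fix e :: real assume "e > 0"
    then obtain N where N: "\<forall>n\<ge>N. g (s n) < e/2" using smallN[of "e/2"] by auto
    have "dist (s m) (s n) < e" if "m \<ge> N" "n \<ge> N" for m n
    proof -
      have "g (s m) < e/2" "g (s n) < e/2" using N that by auto
      then show ?thesis using tri[of "s m" "s n"] by linarith
    qed
    then show "\<exists>M. \<forall>m\<ge>M. \<forall>n\<ge>M. dist (s m) (s n) < e" by blast
  qed
  then obtain x0 where x0: "s \<longlonglongrightarrow> x0" using Cauchy_convergent_iff convergent_def by blast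
  have gx0: "g x0 \<le> 0"
  proof (rule field_le_epsilon)
    fix e :: real assume e: "e > 0"
    obtain N1 where N1: "\<forall>n\<ge>N1. g (s n) < e/2" using smallN[of "e/2"] e by auto
    obtain N2 where N2: "\<forall>n\<ge>N2. dist (s n) x0 < e/2" using x0 e unfolding LIMSEQ_def
      by (metis half_gt_zero)
    define n where "n = max N1 N2"
    have "g x0 \<le> g (s n) + dist x0 (s n)" by (rule tri2)
    moreover have "g (s n) < e/2" "dist (s n) x0 < e/2" using N1 N2 by (auto simp: n_def)
    ultimately show "g x0 \<le> 0 + e" by (simp add: dist_commute)
  qed
  have val: "\<phi> f = f x0" if fL: "f \<in> Lip0 z" for f
  proof -
    define L where "L = lipnorm f"
    have L0: "0 \<le> L" using lip0_bound(2)[OF fL] by (simp add: L_def)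
    have "\<bar>f x0 - \<phi> f\<bar> \<le> 0"
    proof (rule field_le_epsilon)
      fix e :: real assume e: "e > 0"
      define \<eta> where "\<eta> = e / (L + 1)"
      have \<eta>: "\<eta> > 0" using e L0 by (simp add: \<eta>_def)
      obtain x where x: "\<forall>h\<in>{f, fa x0}. \<bar>h x - \<phi> h\<bar> < \<eta>"
        using H[of "{f, fa x0}" \<eta>] faL fL \<eta> by auto
      then have x1: "\<bar>f x - \<phi> f\<bar> < \<eta>" and x2: "\<bar>dist x x0 - g x0\<bar> < \<eta>"
        using near by auto
      have d: "dist x x0 < \<eta>" using x2 gx0 by arith
      have "\<bar>f x0 - f x\<bar> \<le> L * dist x0 x" using lip0_bound(1)[OF fL] by (simp add: L_def)
      also have "\<dots> \<le> L * \<eta>" using d L0 by (simp add: dist_commute mult_left_mono)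
      finally have "\<bar>f x0 - \<phi> f\<bar> \<le> L * \<eta> + \<eta>" using x1 by arith
      also have "L * \<eta> + \<eta> = (L + 1) * (e / (L + 1))" unfolding \<eta>_def by (simp add: distrib_right add_divide_distrib)
      also have "\<dots> = e" using L0 by simp
      finally show "\<bar>f x0 - \<phi> f\<bar> \<le> 0 + e" by simp
    qed
    then show ?thesis by simp
  qed
  have ext: "\<phi> \<in> Lip0 z \<rightarrow>\<^sub>E UNIV" using phi unfolding FreeSpace_def Lip0_dual_def by blast
  have "\<phi> = delta z x0"
  proof
    fix f show "\<phi> f = delta z x0 f"
      using val ext by (cases "f \<in> Lip0 z") (auto simp: delta_def)
  qed
  then show ?thesis by blast
qed

lemma lin_Lip0:
  assumes "f \<in> Lip0 z" "g \<in> Lip0 z"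
  shows "(\<lambda>x. a * f x + b * g x) \<in> Lip0 z"
proof -
  obtain L1 where L1: "L1-lipschitz_on UNIV f" using assms by (auto simp: Lip0_def)
  obtain L2 where L2: "L2-lipschitz_on UNIV g" using assms by (auto simp: Lip0_def)
  have "(\<bar>a\<bar> * L1 + \<bar>b\<bar> * L2)-lipschitz_on UNIV (\<lambda>x. a * f x + b * g x)"
  proof (rule lipschitz_onI)
    fix x y :: 'a
    have "\<bar>f x - f y\<bar> \<le> L1 * dist x y" using L1 by (auto simp: lipschitz_on_def dist_real_def)
    then have 1: "\<bar>a * (f x - f y)\<bar> \<le> \<bar>a\<bar> * (L1 * dist x y)"
      by (simp add: abs_mult mult_left_mono)
    have "\<bar>g x - g y\<bar> \<le> L2 * dist x y" using L2 by (auto simp: lipschitz_on_def dist_real_def)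
    then have 2: "\<bar>b * (g x - g y)\<bar> \<le> \<bar>b\<bar> * (L2 * dist x y)"
      by (simp add: abs_mult mult_left_mono)
    have "\<bar>(a * f x + b * g x) - (a * f y + b * g y)\<bar> \<le> \<bar>a * (f x - f y)\<bar> + \<bar>b * (g x - g y)\<bar>"
      by (simp add: algebra_simps abs_triangle_ineq[of "a * f x - a * f y" "b * g x - b * g y", simplified])
    then show "dist (a * f x + b * g x) (a * f y + b * g y) \<le> (\<bar>a\<bar> * L1 + \<bar>b\<bar> * L2) * dist x y"
      using 1 2 by (simp add: dist_real_def algebra_simps)
  next
    show "0 \<le> \<bar>a\<bar> * L1 + \<bar>b\<bar> * L2" using L1 L2 by (simp add: lipschitz_on_def)
  qed
  then show ?thesis using assms by (auto simp: Lip0_def)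
qed

lemma delta_Free: "delta z x \<in> FreeSpace z"
proof -
  have zL: "(\<lambda>y::'a. 0::real) \<in> Lip0 z" by (auto simp: Lip0_def intro!: exI[of _ 0] lipschitz_onI)
  have zn: "lipnorm (\<lambda>y::'a. 0::real) \<le> 1"
  proof -
    have "0-lipschitz_on UNIV (\<lambda>y::'a. 0::real)" by (rule lipschitz_onI) auto
    then have "lipnorm (\<lambda>y::'a. 0::real) \<le> 0" by (rule lipnorm_le)
    then show ?thesis by simp
  qed
  have D: "delta z x \<in> Lip0_dual z"
    unfolding Lip0_dual_def
  proof (intro CollectI conjI ballI allI)
    show "delta z x \<in> Lip0 z \<rightarrow>\<^sub>E UNIV" by (simp add: delta_def)
  next
    fix f g a b assume "f \<in> Lip0 z" "g \<in> Lip0 z"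
    then show "delta z x (\<lambda>x. a * f x + b * g x) = a * delta z x f + b * delta z x g"
      using lin_Lip0[of f z g a b] by (simp add: delta_def)
  next
    show "\<exists>C. \<forall>f\<in>Lip0 z. \<bar>delta z x f\<bar> \<le> C * lipnorm f"
    proof (intro exI ballI)
      fix f assume fL: "f \<in> Lip0 z"
      have "\<bar>f x - f z\<bar> \<le> lipnorm f * dist x z" by (rule lip0_bound(1)[OF fL])
      then show "\<bar>delta z x f\<bar> \<le> dist x z * lipnorm f" using fL by (simp add: delta_def Lip0_def mult.commute)
    qed
  qed
  have psi: "delta z x \<in> delta_span z"
    unfolding delta_span_def
    by (rule CollectI, rule exI[of _ "{x}"], rule exI[of _ "\<lambda>_. 1"]) (simp add: delta_def)
  have dn: "dual_norm z (\<lambda>f. delta z x f - delta z x f) = 0"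
    unfolding dual_norm_def using zL zn by (simp, subst cSUP_const) auto
  show ?thesis unfolding FreeSpace_def
  proof (intro CollectI conjI allI impI D)
    fix e :: real assume "e > 0"
    then show "\<exists>\<psi>\<in>delta_span z. dual_norm z (\<lambda>f. delta z x f - \<psi> f) < e"
      using psi dn by (intro bexI[OF _ psi]) simp
  qed
qed

theorem proposition2p9:
  fixes z :: "'a::complete_space"
  shows "closedin (weak_top_Free z) (range (delta z))"
proof -
  let ?X = "powertop_real (Lip0 z)"
  have ts: "topspace (weak_top_Free z) = topspace ?X \<inter> FreeSpace z"
    unfolding weak_top_Free_def by (rule topspace_subtopology)
  have R: "range (delta z) \<subseteq> topspace ?X \<inter> FreeSpace z"
  proof
    fix \<phi> assume "\<phi> \<in> range (delta z)"
    then obtain x where x: "\<phi> = delta z x" by blast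
    have "delta z x \<in> Lip0 z \<rightarrow>\<^sub>E UNIV" by (simp add: delta_def)
    then have "delta z x \<in> topspace ?X" by (simp add: topspace_product_topology)
    then show "\<phi> \<in> topspace ?X \<inter> FreeSpace z" using delta_Free[of z x] x by blast
  qed
  have "openin (weak_top_Free z) (topspace ?X \<inter> FreeSpace z - range (delta z))"
  proof (subst openin_subopen, intro ballI)
    fix \<phi> assume \<phi>: "\<phi> \<in> topspace ?X \<inter> FreeSpace z - range (delta z)"
    have "\<exists>F \<eta>. finite F \<and> F \<subseteq> Lip0 z \<and> \<eta> > 0 \<and> (\<forall>x. \<exists>f\<in>F. \<not> \<bar>f x - \<phi> f\<bar> < \<eta>)"
    proof (rule ccontr)
      assume nt: "\<not> ?thesis"
      have H: "\<exists>x. \<forall>f\<in>F. \<bar>f x - \<phi> f\<bar> < \<eta>"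
        if a: "finite F" "F \<subseteq> Lip0 z" "\<eta> > 0" for F \<eta>
      proof (rule ccontr)
        assume b: "\<not> (\<exists>x. \<forall>f\<in>F. \<bar>f x - \<phi> f\<bar> < \<eta>)"
        have "\<forall>x. \<exists>f\<in>F. \<not> \<bar>f x - \<phi> f\<bar> < \<eta>" using b by blast
        then have "\<exists>F \<eta>. finite F \<and> F \<subseteq> Lip0 z \<and> \<eta> > 0 \<and> (\<forall>x. \<exists>f\<in>F. \<not> \<bar>f x - \<phi> f\<bar> < \<eta>)"
          using a by (intro exI[of _ F] exI[of _ \<eta>]) simp
        then show False using nt by (rule notE[rotated])
      qed
      have phiF: "\<phi> \<in> FreeSpace z" using \<phi> by (rule IntD2[OF DiffD1])
      obtain x0 where x0: "\<phi> = delta z x0" using key[of \<phi> z, OF phiF H] by blast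
      have "\<phi> \<in> range (delta z)" unfolding x0 by (rule rangeI)
      then show False using \<phi> by (meson DiffD2)
    qed
    then obtain F \<eta> where F: "finite F" "F \<subseteq> Lip0 z" "\<eta> > 0"
      and bad: "\<forall>x. \<exists>f\<in>F. \<not> \<bar>f x - \<phi> f\<bar> < \<eta>" by blast
    define W where "W = {\<psi> \<in> topspace ?X. \<forall>f\<in>F. \<bar>\<psi> f - \<phi> f\<bar> < \<eta>}"
    have oW: "openin ?X W" unfolding W_def by (rule basic_open[OF F(1,2)])
    show "\<exists>T. openin (weak_top_Free z) T \<and> \<phi> \<in> T \<and> T \<subseteq> topspace ?X \<inter> FreeSpace z - range (delta z)"
    proof (intro exI conjI)
      show "openin (weak_top_Free z) (W \<inter> FreeSpace z)"
        unfolding weak_top_Free_def openin_subtopology using oW by blast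
      have p1: "\<phi> \<in> topspace ?X" using \<phi> by (rule IntD1[OF DiffD1])
      have p2: "\<phi> \<in> FreeSpace z" using \<phi> by (rule IntD2[OF DiffD1])
      show "\<phi> \<in> W \<inter> FreeSpace z" unfolding W_def
        by (intro IntI CollectI conjI ballI p1 p2) (simp add: F(3))
      show "W \<inter> FreeSpace z \<subseteq> topspace ?X \<inter> FreeSpace z - range (delta z)"
      proof
        fix \<psi> assume \<psi>: "\<psi> \<in> W \<inter> FreeSpace z"
        have "\<psi> \<notin> range (delta z)"
        proof
          assume "\<psi> \<in> range (delta z)"
          then obtain x where x: "\<psi> = delta z x" by auto
          obtain f where f: "f \<in> F" "\<not> \<bar>f x - \<phi> f\<bar> < \<eta>" using bad by blast
          have "\<bar>\<psi> f - \<phi> f\<bar> < \<eta>" using \<psi> f(1) unfolding W_def by blast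
          moreover have "\<psi> f = f x" using x f(1) F(2) by (auto simp: delta_def)
          ultimately show False using f(2) by simp
        qed
        then show "\<psi> \<in> topspace ?X \<inter> FreeSpace z - range (delta z)" using \<psi> unfolding W_def by blast
      qed
    qed
  qed
  then show ?thesis unfolding closedin_def ts using R by (intro conjI)
qed

end
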